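(* Let $\mathbb{F}_q$ have prime characteristic $p$. For every integer $k\ge1$, \[\bigcup_{i=1}^k \{p^j : 0\le j\le t_i\}\,D(q^i-1)\ \subseteq\ P(k,\mathbb{F}_q),\] where $t_i=\min\{t\in\mathbb{Z} : p^t\ge\lfloor k/i\rfloor\}$ for $1\le i\le k$.
   Context: A sequence $(a_n)_{n\ge0}$ over $\mathbb{F}_q$ satisfies a linear recurrence of degree $k$ if there are $c_0,\dots,c_{k-1}\in\mathbb{F}_q$, with $c_0\neq0$ (standing assumption), such that $a_{n+k}=\sum_{i=0}^{k-1}c_ia_{n+i}$ for all $n\ge0$; such sequences are purely periodic and $\rho(\mathbf{a})$ is the least $m>0$ with $a_{n+m}=a_n$ for all $n\ge0$. $P(k,\mathbb{F}_q)$ is the set of all $\rho(\mathbf{a})$ for sequences $\mathbf{a}$ satisfying some linear recurrence of degree $k$ over $\mathbb{F}_q$. For $n\in\mathbb{Z}_{>0}$, $D(n)$ is the set of positive divisors of $n$. For sets $S_1,S_2\subseteq\mathbb{Z}$ and $a\in\mathbb{Z}$, $aS_1=\{ax: x\in S_1\}$ and $S_1S_2=\{xy : x\in S_1, y\in S_2\}$. *)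

theory Defs
  imports Main "HOL-Computational_Algebra.Primes"
begin

definition satisfies_lin_rec :: "nat \<Rightarrow> (nat \<Rightarrow> 'a::field) \<Rightarrow> bool" where
  "satisfies_lin_rec k a \<longleftrightarrow>
     (\<exists>c :: nat \<Rightarrow> 'a. c 0 \<noteq> 0 \<and>
        (\<forall>n. a (n + k) = (\<Sum>i<k. c i * a (n + i))))"

definition least_period :: "(nat \<Rightarrow> 'a) \<Rightarrow> nat" where
  "least_period a = (LEAST m. m > 0 \<and> (\<forall>n. a (n + m) = a n))"

definition periods_set :: "nat \<Rightarrow> 'a::{finite,field} itself \<Rightarrow> nat set" where
  "periods_set k _ = {m. \<exists>a :: nat \<Rightarrow> 'a. satisfies_lin_rec k a \<and> m = least_period a}"

definition divisors_set :: "nat \<Rightarrow> nat set" where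
  "divisors_set n = {d. d > 0 \<and> d dvd n}"

definition t_exp :: "nat \<Rightarrow> nat \<Rightarrow> nat \<Rightarrow> nat" where
  "t_exp p k i = (LEAST t::nat. p ^ t \<ge> k div i)"

end

theory Submission
  imports Defs "HOL-Algebra.Algebraic_Closure_Type" "HOL-Algebra.Sylow" "HOL-Number_Theory.Residues"
begin

hide_const (open) Divisibility.prime

definition Lf :: "'a::field poly \<Rightarrow> 'a poly \<Rightarrow> 'a" where
  "Lf f h = coeff (h mod f) (degree f - 1)"

definition sq :: "'a::field poly \<Rightarrow> nat \<Rightarrow> 'a" where
  "sq f n = Lf f (monom 1 n)"

lemma Lf_add: "Lf f (a + b) = Lf f a + Lf f b"
  by (simp add: Lf_def poly_mod_add_left)
lemma Lf_diff: "Lf f (a - b) = Lf f a - Lf f b"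
  by (simp add: Lf_def poly_mod_diff_left)
lemma Lf_smult: "Lf f (smult c a) = c * Lf f a"
  by (simp add: Lf_def mod_smult_left)
lemma Lf_sum: "Lf f (\<Sum>i\<in>A. g i) = (\<Sum>i\<in>A. Lf f (g i))"
  by (induction A rule: infinite_finite_induct) (simp_all add: Lf_add, simp_all add: Lf_def)
lemma Lf_dvd: "f dvd h \<Longrightarrow> Lf f h = 0"
  by (simp add: Lf_def)
lemma Lf_modeq: "a mod f = b mod f \<Longrightarrow> Lf f a = Lf f b"
  by (simp add: Lf_def)

lemma sq_annihil:
  fixes f F :: "'a::field poly"
  assumes "f dvd F"
  shows "(\<Sum>i\<le>degree F. coeff F i * sq f (n+i)) = 0"
proof -
  have "F * monom 1 n = (\<Sum>i\<le>degree F. monom (coeff F i) i) * monom 1 n"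
    by (simp add: poly_as_sum_of_monoms)
  also have "\<dots> = (\<Sum>i\<le>degree F. smult (coeff F i) (monom 1 (n+i)))"
    by (simp add: sum_distrib_right mult_monom smult_monom add.commute)
  finally have eq: "F * monom 1 n = (\<Sum>i\<le>degree F. smult (coeff F i) (monom 1 (n+i)))" .
  have "Lf f (F * monom 1 n) = 0" using assms by (intro Lf_dvd) auto
  then show ?thesis unfolding eq Lf_sum Lf_smult sq_def .
qed

lemma sq_period:
  fixes f :: "'a::field poly"
  assumes "degree f \<ge> 1"
  shows "(\<forall>n. sq f (n+e) = sq f n) \<longleftrightarrow> f dvd (monom 1 e - 1)"
proof
  assume "f dvd monom 1 e - 1"
  then have "f dvd monom 1 n * (monom 1 e - 1)" for n by auto
  moreover have "monom 1 n * (monom 1 e - 1) = monom 1 (n+e) - (monom 1 n :: 'a poly)" for n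
    by (simp add: algebra_simps mult_monom)
  ultimately show "\<forall>n. sq f (n+e) = sq f n"
    by (metis Lf_diff Lf_dvd eq_iff_diff_eq_0 sq_def)
next
  assume per: "\<forall>n. sq f (n+e) = sq f n"
  define z where "z = (monom 1 e - 1) mod f"
  have f0: "f \<noteq> 0" using assms by auto
  have Lz: "Lf f (monom 1 n * z) = 0" for n
  proof -
    have "(monom 1 n * z) mod f = (monom 1 n * (monom 1 e - 1)) mod f"
      unfolding z_def by (simp add: mod_mult_right_eq)
    then have "Lf f (monom 1 n * z) = Lf f (monom 1 n * (monom 1 e - 1))" by (rule Lf_modeq)
    also have "monom 1 n * (monom 1 e - 1) = monom 1 (n+e) - (monom 1 n :: 'a poly)"
      by (simp add: algebra_simps mult_monom)
    finally show ?thesis using per by (simp add: Lf_diff sq_def[symmetric])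
  qed
  show "f dvd monom 1 e - 1"
  proof (rule ccontr)
    assume "\<not> f dvd monom 1 e - 1"
    then have z0: "z \<noteq> 0" unfolding z_def by (simp add: mod_eq_0_iff_dvd)
    have dz: "degree z < degree f" using degree_mod_less'[OF f0] z0 unfolding z_def by auto
    define n where "n = degree f - 1 - degree z"
    have dnz: "degree (monom (1::'a) n * z) = degree f - 1"
      using dz z0 by (simp add: degree_mult_eq degree_monom_eq n_def)
    then have "(monom 1 n * z) mod f = monom 1 n * z"
      using assms by (intro mod_poly_less) simp
    then have "Lf f (monom 1 n * z) = coeff (monom 1 n * z) (n + degree z)"
      unfolding Lf_def using dz n_def by (simp add: n_def)
    also have "\<dots> = lead_coeff z" by (simp add: coeff_monom_mult)
    finally show False using Lz z0 by simp
  qed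
qed

lemma rec_from_poly:
  fixes f :: "'a::field poly"
  assumes d1: "degree f \<ge> 1" and c0: "coeff f 0 \<noteq> 0" and dk: "degree f \<le> k"
  shows "satisfies_lin_rec k (sq f)"
proof -
  define F where "F = f * [:-1,1:]^(k - degree f)"
  have f0: "f \<noteq> 0" using d1 by auto
  have dF: "degree F = k" unfolding F_def using f0 dk
    by (simp add: degree_mult_eq degree_power_eq)
  have F0: "F \<noteq> 0" unfolding F_def using f0 by simp
  have cF0: "coeff F 0 \<noteq> 0" unfolding F_def using c0
    by (simp add: coeff_mult_0 coeff_0_power)
  define lc where "lc = coeff F k"
  have lc0: "lc \<noteq> 0" unfolding lc_def using F0 dF by (metis leading_coeff_0_iff)
  define c where "c i = - coeff F i / lc" for i
  have "c 0 \<noteq> 0" using cF0 lc0 by (simp add: c_def)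
  moreover have "\<forall>n. sq f (n + k) = (\<Sum>i<k. c i * sq f (n + i))"
  proof
    fix n
    have "(\<Sum>i\<le>k. coeff F i * sq f (n+i)) = 0"
      using sq_annihil[of f F n] dF unfolding F_def by simp
    then have "lc * sq f (n+k) + (\<Sum>i<k. coeff F i * sq f (n+i)) = 0"
      by (simp add: lessThan_Suc_atMost[symmetric] lc_def add.commute)
    then have "sq f (n+k) = - (\<Sum>i<k. coeff F i * sq f (n+i)) / lc"
      using lc0 by (simp add: field_simps add_eq_0_iff)
    also have "\<dots> = (\<Sum>i<k. c i * sq f (n+i))"
      by (simp add: c_def sum_divide_distrib sum_negf)
    finally show "sq f (n + k) = (\<Sum>i<k. c i * sq f (n + i))" .
  qed
  ultimately show ?thesis unfolding satisfies_lin_rec_def by blast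
qed

lemma least_period_sq:
  fixes f :: "'a::field poly"
  assumes "degree f \<ge> 1" "N > 0" "f dvd monom 1 N - 1"
    "\<And>n. n > 0 \<Longrightarrow> f dvd monom 1 n - 1 \<Longrightarrow> N \<le> n"
  shows "least_period (sq f) = N"
  unfolding least_period_def
proof (rule Least_equality)
  show "0 < N \<and> (\<forall>n. sq f (n + N) = sq f n)" using assms sq_period by blast
next
  fix y assume "0 < y \<and> (\<forall>n. sq f (n + y) = sq f n)"
  then show "N \<le> y" using assms sq_period by blast
qed

lemma minus_one_pow_char:
  assumes "prime CHAR('b::comm_ring_1)"
  shows "(-1::'b) ^ (CHAR('b)^s) = -1"
proof -
  have N: "CHAR('b)^s > 0" using assms prime_gt_0_nat by auto
  have f: "((1::'b) + (-1)) ^ (CHAR('b)^s) = 1 ^ (CHAR('b)^s) + (-1) ^ (CHAR('b)^s)"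
    by (rule freshmans_dream'[OF assms]) simp
  have "1 + (-1::'b) ^ (CHAR('b)^s) = ((1::'b) + (-1)) ^ (CHAR('b)^s)" by (simp only: f power_one)
  also have "\<dots> = 0" using zero_power[OF N] by simp
  finally have "1 + (-1::'b) ^ (CHAR('b)^s) = 0" .
  then show ?thesis by (simp add: add_eq_0_iff)
qed

lemma sub_one_pow_char:
  assumes "prime CHAR('b::comm_ring_1)"
  shows "(x - 1::'b) ^ (CHAR('b)^s) = x ^ (CHAR('b)^s) - 1"
proof -
  have "(x + (-1)) ^ (CHAR('b)^s) = x ^ (CHAR('b)^s) + (-1) ^ (CHAR('b)^s)"
    by (rule freshmans_dream'[OF assms]) simp
  then show ?thesis using minus_one_pow_char[OF assms] by simp
qed

lemma Ypow:
  fixes p :: nat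
  assumes "prime p" "CHAR('a::field) = p"
  shows "monom (1::'a) (p^s * n) - 1 = (monom 1 n - 1)^(p^s)"
proof -
  have pc: "prime CHAR('a poly)" using assms by simp
  have "(monom (1::'a) n - 1)^(CHAR('a poly)^s) = (monom 1 n)^(CHAR('a poly)^s) - 1"
    by (rule sub_one_pow_char[OF pc])
  then show ?thesis using assms by (simp add: monom_power mult.commute)
qed

lemma ord_power1:
  fixes m :: "'a::field poly"
  assumes p: "prime p" "CHAR('a) = p"
    and dm: "m dvd monom 1 d - 1" and e1: "e \<le> p^j"
  shows "m^e dvd monom 1 (p^j*d) - 1"
proof -
  have "monom (1::'a) (p^j*d) - 1 = (monom 1 d - 1)^(p^j)"
    using Ypow[OF p, of j d] .
  moreover have "m^e dvd m^(p^j)" using e1 by (rule le_imp_power_dvd)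
  moreover have "m^(p^j) dvd (monom 1 d - 1)^(p^j)" using dm by (rule dvd_power_same)
  ultimately show ?thesis by (metis dvd_trans)
qed


lemma ac_add: "map_poly to_ac (p + q) = map_poly to_ac p + map_poly to_ac q"
  by (rule poly_eqI) (simp add: coeff_map_poly)
lemma ac_diff: "map_poly to_ac (p - q) = map_poly to_ac p - map_poly to_ac q"
  by (rule poly_eqI) (simp add: coeff_map_poly)
lemma ac_mult: "map_poly to_ac (p * q) = map_poly to_ac p * map_poly to_ac q"
  by (rule poly_eqI) (simp add: coeff_map_poly coeff_mult to_ac_sum)
lemma ac_one: "map_poly to_ac (1::'a::field poly) = 1"
  by simp
lemma ac_monom: "map_poly to_ac (monom c n) = monom (to_ac c) n"
  by (simp add: map_poly_monom)
lemma ac_power: "map_poly to_ac (p ^ n) = map_poly to_ac p ^ n"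
  by (induction n) (simp_all add: ac_mult)
lemma ac_dvd: "p dvd q \<Longrightarrow> map_poly to_ac p dvd map_poly to_ac q"
  by (elim dvdE) (simp add: ac_mult)
lemma ac_degree: "degree (map_poly to_ac p) = degree p"
  by (simp add: degree_map_poly)
lemma ac_Xn: "map_poly to_ac (monom 1 n - 1 :: 'a::field poly) = monom 1 n - 1"
  by (simp add: ac_diff ac_monom)

lemma pderiv_sq: "pderiv (\<pi>^2 * w) = \<pi> * (\<pi> * pderiv w + w * (2 * pderiv (\<pi>::'b::field poly)))"
  by (simp add: pderiv_mult power2_eq_square algebra_simps)

lemma sqfree_lin:
  fixes a :: "'b::field"
  assumes n: "n > 0" and pn: "\<not> CHAR('b) dvd n"
  shows "\<not> [:-a,1:]^2 dvd monom 1 n - 1"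
proof
  assume "[:-a,1:]^2 dvd monom 1 n - 1"
  then obtain w where w: "monom 1 n - 1 = [:-a,1:]^2 * w" by (elim dvdE)
  have "pderiv (monom (1::'b) n - 1) = [:-a,1:] * ([:-a,1:] * pderiv w + w * (2 * pderiv [:-a,1:]))"
    unfolding w by (rule pderiv_sq)
  then have "poly (pderiv (monom (1::'b) n - 1)) a = 0" by simp
  moreover have "pderiv (monom (1::'b) n - 1) = smult (of_nat n) (monom 1 (n - 1))"
    by (simp add: pderiv_diff pderiv_monom smult_monom)
  moreover have "(of_nat n :: 'b) \<noteq> 0" using pn by (simp add: of_nat_eq_0_iff_char_dvd)
  ultimately have a1: "a^(n-1) = 0" by (simp add: poly_monom)
  have "poly (monom (1::'b) n - 1) a = 0" unfolding w by simp
  then have "a^n = 1" by (simp add: poly_monom)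
  moreover have "a^n = a * a^(n-1)" using n by (simp add: power_eq_if)
  ultimately show False using a1 by simp
qed

lemma order_pow: "P \<noteq> 0 \<Longrightarrow> Polynomial.order a (P ^ k) = k * Polynomial.order a P"
proof (induction k)
  case 0
  then show ?case by simp
next
  case (Suc k)
  then have "P * P^k \<noteq> 0" by simp
  then show ?case using Suc by (simp add: order_mult)
qed

lemma ord_power2:
  fixes m :: "'a::field poly"
  assumes p: "prime p" "CHAR('a) = p"
    and ordm: "\<And>n. m dvd monom 1 n - 1 \<Longrightarrow> d dvd n"
    and pd: "\<not> p dvd d" and degm: "degree m \<ge> 1"
    and e0: "e \<ge> 1" and e2: "\<And>s. s < j \<Longrightarrow> p^s < e"
    and n0: "n > 0" and mn: "m^e dvd monom 1 n - 1"
  shows "p^j*d \<le> n"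
proof -
  have "\<not> is_unit p" using p(1) not_prime_unit by blast
  from multiplicity_decompose'[OF _ this, of n] n0 obtain n' where
    nn: "n = p ^ multiplicity p n * n'" and pn': "\<not> p dvd n'" by auto
  define s where "s = multiplicity p n"
  have nn: "n = p^s * n'" using nn s_def by simp
  have n'0: "n' > 0" using n0 nn by (cases n') auto
  have "m dvd m^e" using e0 by (simp add: dvd_power)
  then have "m dvd monom 1 n - 1" using mn by (rule dvd_trans)
  then have "d dvd n" by (rule ordm)
  moreover have "coprime d (p^s)"
  proof -
    have "coprime p d" using pd p(1) by (simp add: prime_imp_coprime)
    then show ?thesis by (simp add: coprime_commute)
  qed
  ultimately have "d dvd n'" unfolding nn by (metis coprime_dvd_mult_right_iff)
  then have dn': "d \<le> n'" using n'0 by (simp add: dvd_imp_le)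
  have sj: "j \<le> s"
  proof (rule ccontr)
    assume "\<not> j \<le> s"
    then have lt: "p^s < e" using e2 by simp
    define M where "M = map_poly to_ac m"
    have dM: "degree M > 0" using degm by (simp add: M_def ac_degree)
    obtain a where a: "poly M a = 0" using alg_closed_imp_poly_has_root[OF dM] by blast
    have aM: "[:-a,1:] dvd M" using a by (simp add: poly_eq_0_iff_dvd)
    have pL: "prime CHAR('a alg_closure)" "CHAR('a alg_closure) = p" using p by simp_all
    have YL: "monom (1::'a alg_closure) n - 1 = (monom 1 n' - 1)^(p^s)"
      using Ypow[OF p(1) pL(2), of s n'] nn by simp
    have "M^e dvd monom 1 n - 1"
      using ac_dvd[OF mn] by (simp add: M_def ac_power ac_Xn)
    moreover have "[:-a,1:]^e dvd M^e" using aM by (rule dvd_power_same)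
    ultimately have "[:-a,1:]^e dvd (monom (1::'a alg_closure) n' - 1)^(p^s)"
      using YL dvd_trans by metis
    moreover have P0: "(monom (1::'a alg_closure) n' - 1) \<noteq> 0"
    proof
      assume "(monom (1::'a alg_closure) n' - 1) = 0"
      then have "coeff (monom (1::'a alg_closure) n' - 1) n' = 0" by simp
      then show False using n'0 by simp
    qed
    ultimately have "e \<le> Polynomial.order a ((monom (1::'a alg_closure) n' - 1)^(p^s))"
      by (simp add: order_divides)
    also have "\<dots> = p^s * Polynomial.order a (monom (1::'a alg_closure) n' - 1)"
      using P0 by (rule order_pow)
    also have "Polynomial.order a (monom (1::'a alg_closure) n' - 1) \<le> 1"
    proof (rule ccontr)
      assume "\<not> Polynomial.order a (monom (1::'a alg_closure) n' - 1) \<le> 1"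
      then have "[:-a,1:]^2 dvd (monom (1::'a alg_closure) n' - 1)"
        using order_divides[of a 2] by simp
      moreover have "\<not> CHAR('a alg_closure) dvd n'" using pn' pL by simp
      ultimately show False using sqfree_lin[OF n'0] by blast
    qed
    then have "p^s * Polynomial.order a (monom (1::'a alg_closure) n' - 1) \<le> p^s" by simp
    finally show False using lt by simp
  qed
  have p1: "1 \<le> p" using prime_ge_1_nat[OF p(1)] .
  have "p^j \<le> p^s" using power_increasing[OF sj p1] .
  then show ?thesis unfolding nn using dn' by (simp add: mult_le_mono)
qed

lemma prime_dvd_card_eq_char:
  fixes l :: nat
  assumes pc: "prime CHAR('a::{finite,field})" and l: "prime l" and ld: "l dvd card (UNIV::'a set)"
  shows "l = CHAR('a)"
proof (rule ccontr)
  assume lp: "l \<noteq> CHAR('a)"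
  define G where "G = \<lparr> carrier = (UNIV :: 'a set), monoid.mult = (+), one = (0 :: 'a) \<rparr>"
  interpret group G
  proof (rule groupI)
    fix x assume x: "x \<in> carrier G"
    show "\<exists>y\<in>carrier G. y \<otimes>\<^bsub>G\<^esub> x = \<one>\<^bsub>G\<^esub>"
      by (intro bexI[of _ "-x"]) (auto simp: G_def)
  qed (auto simp: G_def add_ac)
  have powG: "x [^]\<^bsub>G\<^esub> n = of_nat n * x" for x :: 'a and n :: nat
    by (induction n) (simp_all add: G_def algebra_simps)
  have q0: "card (UNIV::'a set) \<noteq> 0" by simp
  have "\<not> is_unit l" using l not_prime_unit by blast
  from multiplicity_decompose'[OF q0 this] obtain r where
    qr: "card (UNIV::'a set) = l ^ multiplicity l (card (UNIV::'a set)) * r" and lr: "\<not> l dvd r" by blast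
  define a where "a = multiplicity l (card (UNIV::'a set))"
  have qa: "card (UNIV::'a set) = l^a * r" using qr unfolding a_def .
  have a1: "a \<ge> 1"
  proof (rule ccontr)
    assume "\<not> a \<ge> 1"
    then have "a = 0" by simp
    then have "card (UNIV::'a set) = r" using qa by simp
    then show False using ld lr by simp
  qed
  have ordG: "Coset.order G = l^a * r" using qa unfolding Coset.order_def G_def by simp
  obtain H where H: "subgroup H G" "card H = l^a"
    using sylow_thm[OF l is_group ordG] unfolding G_def by auto
  have "l^a \<ge> 2"
  proof -
    have "l^1 \<le> l^a" using power_increasing[OF a1 prime_ge_1_nat[OF l]] .
    then show ?thesis using l prime_ge_2_nat[OF l] by simp
  qed
  then have "\<not> H \<subseteq> {0}"
  proof (intro notI)
    assume "H \<subseteq> {0}"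
    then have "card H \<le> card {0::'a}" by (intro card_mono) auto
    then show False using H(2) \<open>l^a \<ge> 2\<close> by simp
  qed
  then obtain x where x: "x \<in> H" "x \<noteq> 0" by blast
  interpret HG: group "G\<lparr>carrier := H\<rparr>" using subgroup_imp_group[OF H(1)] .
  have "finite (carrier (G\<lparr>carrier := H\<rparr>))" by simp
  then have "x [^]\<^bsub>G\<lparr>carrier := H\<rparr>\<^esub> Coset.order (G\<lparr>carrier := H\<rparr>) = \<one>\<^bsub>G\<lparr>carrier := H\<rparr>\<^esub>"
    using x(1) by (intro HG.pow_order_eq_1) auto
  then have "x [^]\<^bsub>G\<^esub> (l^a) = 0"
    using H(2) nat_pow_consistent[of x "l^a" H] unfolding Coset.order_def by (simp add: G_def)
  then have xl: "of_nat (l^a) * x = 0" by (simp add: powG)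
  have xp: "of_nat CHAR('a) * x = 0" by simp
  have "coprime (l^a) CHAR('a)"
    using l pc lp by (simp add: primes_coprime)
  then have g1: "gcd (l^a) CHAR('a) = 1" by simp
  have "l^a \<noteq> 0" using l by simp
  from bezout_nat[OF this, of "CHAR('a)"] obtain u v where
    uv: "l^a * u = CHAR('a) * v + 1" using g1 by auto
  have "of_nat (l^a * u) * x = of_nat u * (of_nat (l^a) * x)" by (simp add: mult_ac)
  also have "\<dots> = 0" by (simp only: xl mult_zero_right)
  finally have "of_nat (l^a * u) * x = 0" .
  moreover have "of_nat (l^a * u) * x = of_nat v * (of_nat CHAR('a) * x) + x"
    unfolding uv by (simp add: algebra_simps)
  then have C: "of_nat (l^a * u) * x = x" by (simp only: xp mult_zero_right add_0)
  ultimately have "x = 0" by (simp only: C)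
  then show False using x by simp
qed

lemma card_prime_power:
  assumes pc: "prime CHAR('a::{finite,field})"
  shows "card (UNIV::'a set) = CHAR('a) ^ multiplicity CHAR('a) (card (UNIV::'a set))"
proof -
  have q0: "card (UNIV::'a set) \<noteq> 0" by simp
  have "\<not> is_unit CHAR('a)" using pc not_prime_unit by blast
  from multiplicity_decompose'[OF q0 this] obtain r where
    qr: "card (UNIV::'a set) = CHAR('a) ^ multiplicity CHAR('a) (card (UNIV::'a set)) * r" and pr: "\<not> CHAR('a) dvd r" by blast
  have "r = 1"
  proof (rule ccontr)
    assume "r \<noteq> 1"
    then obtain l where l: "prime l" "l dvd r" using prime_factor_nat by blast
    then have "l dvd card (UNIV::'a set)" using qr by (metis dvd_mult_left dvd_refl dvd_trans mult.commute)
    then have "l = CHAR('a)" using prime_dvd_card_eq_char[OF pc l(1)] by blast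
    then show False using l pr by simp
  qed
  then show ?thesis using qr by simp
qed

definition ordP :: "'b::field \<Rightarrow> nat \<Rightarrow> bool" where
  "ordP z n \<longleftrightarrow> (\<forall>e. z^e = 1 \<longleftrightarrow> n dvd e)"

lemma pow_gcd_one:
  fixes z :: "'b::field"
  assumes "z^a = 1" "z^b = 1"
  shows "z^(gcd a b) = 1"
proof (cases "a = 0")
  case True
  then show ?thesis using assms by simp
next
  case False
  from bezout_nat[OF False, of b] obtain x y where xy: "a * x = b * y + gcd a b" by blast
  have "1 = z^(a*x)" using assms by (simp add: power_mult)
  also have "\<dots> = z^(b*y) * z^(gcd a b)" by (simp add: xy power_add)
  also have "\<dots> = z^(gcd a b)" using assms by (simp add: power_mult)
  finally show ?thesis by simp
qed

lemma ordP_prime_power: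
  fixes z :: "'b::field"
  assumes l: "prime l" and k: "k \<ge> 1" and z1: "z^(l^k) = 1" and z2: "z^(l^(k-1)) \<noteq> 1"
  shows "ordP z (l^k)"
  unfolding ordP_def
proof (intro allI iffI)
  fix e assume "z^e = 1"
  then have g: "z^(gcd e (l^k)) = 1" using z1 by (rule pow_gcd_one)
  have "gcd e (l^k) dvd l^k" by simp
  then obtain t where t: "t \<le> k" "gcd e (l^k) = l^t" using divides_primepow_nat[OF l] by blast
  show "l^k dvd e"
  proof (cases "t = k")
    case True
    then show ?thesis using t by (metis gcd_dvd1)
  next
    case False
    then have "t \<le> k - 1" using t by simp
    then have "l^t dvd l^(k-1)" by (simp add: le_imp_power_dvd)
    then obtain c where "l^(k-1) = l^t * c" by (elim dvdE)
    then have "z^(l^(k-1)) = 1" using g t by (simp add: power_mult)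
    then show ?thesis using z2 by simp
  qed
next
  fix e assume "l^k dvd e"
  then obtain c where "e = l^k * c" by (elim dvdE)
  then show "z^e = 1" using z1 by (simp add: power_mult)
qed

lemma ordP_mult:
  fixes x y :: "'b::field"
  assumes x: "ordP x a" and y: "ordP y b" and c: "coprime a b"
  shows "ordP (x*y) (a*b)"
  unfolding ordP_def
proof (intro allI iffI)
  fix e assume xy: "(x*y)^e = 1"
  have xa: "x^a = 1" using x by (simp add: ordP_def)
  have yb: "y^b = 1" using y by (simp add: ordP_def)
  have "(x*y)^(e*a) = 1" using xy by (simp add: power_mult)
  moreover have "x^(e*a) = 1" using xa by (simp add: power_mult mult.commute)
  ultimately have "y^(e*a) = 1" by (simp add: power_mult_distrib)
  then have "b dvd e*a" using y by (simp add: ordP_def)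
  then have be: "b dvd e" using c by (metis coprime_commute coprime_dvd_mult_left_iff)
  have "(x*y)^(e*b) = 1" using xy by (simp add: power_mult)
  moreover have "y^(e*b) = 1" using yb by (simp add: power_mult mult.commute)
  ultimately have "x^(e*b) = 1" by (simp add: power_mult_distrib)
  then have "a dvd e*b" using x by (simp add: ordP_def)
  then have ae: "a dvd e" using c by (metis coprime_dvd_mult_left_iff)
  show "a*b dvd e" using ae be c by (simp add: divides_mult)
next
  fix e assume "a*b dvd e"
  then have "a dvd e" "b dvd e" by (auto intro: dvd_mult_left dvd_mult_right)
  then have "x^e = 1" "y^e = 1" using x y unfolding ordP_def by blast+
  then show "(x*y)^e = 1" by (simp add: power_mult_distrib)
qed

lemma exists_prim_root:
  assumes l: "prime l" and lc: "\<not> CHAR('b::alg_closed_field) dvd l"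
  shows "\<exists>w::'b. ordP w l"
proof -
  have l2: "l \<ge> 2" using l by (simp add: prime_ge_2_nat)
  obtain w :: 'b where w: "(\<Sum>k\<le>l-1. 1 * w^k) = 0"
    using alg_closed[of "l-1" "\<lambda>_. 1::'b"] l2 by auto
  have "{..l-1} = {..<l}" using l2 by auto
  then have ws: "(\<Sum>k<l. w^k) = 0" using w by simp
  have wl: "w^l = 1" using power_diff_1_eq[of w l] ws by simp
  have "w \<noteq> 1"
  proof
    assume "w = 1"
    then have "(of_nat l :: 'b) = 0" using ws by simp
    then show False using lc by (simp add: of_nat_eq_0_iff_char_dvd)
  qed
  then have "ordP w (l^1)" using ordP_prime_power[OF l, of 1 w] wl by simp
  then show ?thesis by auto
qed

lemma exists_ord_pp:
  assumes l: "prime l" and lc: "\<not> CHAR('b::alg_closed_field) dvd l" and k: "k \<ge> 1"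
  shows "\<exists>z::'b. ordP z (l^k)"
proof -
  obtain w :: 'b where w: "ordP w l" using exists_prim_root[OF l lc] by blast
  have "l^(k-1) > 0" using l by (simp add: prime_gt_0_nat)
  then obtain z :: 'b where z: "z^(l^(k-1)) = w" using nth_root_exists by blast
  have lk: "l^k = l^(k-1) * l" using k by (simp add: power_eq_if)
  have "z^(l^k) = 1" using z w unfolding lk power_mult by (simp add: ordP_def)
  moreover have "z^(l^(k-1)) \<noteq> 1"
  proof
    assume "z^(l^(k-1)) = 1"
    then have "w^1 = 1" using z by simp
    then have "l dvd 1" using w unfolding ordP_def by blast
    then show False using l by simp
  qed
  ultimately show ?thesis using ordP_prime_power[OF l k] by blast
qed

lemma exists_ord:
  assumes "d > 0" and pc: "prime CHAR('b::alg_closed_field)" and "\<not> CHAR('b) dvd d"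
  shows "\<exists>z::'b. ordP z d"
  using assms(1,3)
proof (induction d rule: less_induct)
  case (less d)
  show ?case
  proof (cases "d = 1")
    case True
    then show ?thesis by (intro exI[of _ 1]) (simp add: ordP_def)
  next
    case False
    obtain l where l: "prime l" "l dvd d" using prime_factor_nat[OF False] by blast
    have "\<not> is_unit l" using l(1) not_prime_unit by blast
    from multiplicity_decompose'[OF _ this, of d] less.prems obtain d' where
      dd: "d = l ^ multiplicity l d * d'" and ld': "\<not> l dvd d'" by auto
    define k where "k = multiplicity l d"
    have dd: "d = l^k * d'" using dd k_def by simp
    have k1: "k \<ge> 1"
    proof (rule ccontr)
      assume "\<not> k \<ge> 1"
      then have "d = d'" using dd by simp
      then show False using l ld' by simp
    qed
    have d'0: "d' > 0" using dd less.prems by (cases d') auto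
    have l2: "l \<ge> 2" using l(1) by (simp add: prime_ge_2_nat)
    have "l^1 \<le> l^k" using k1 l2 by (intro power_increasing) auto
    then have lk: "1 < l^k" using l2 by simp
    have "1 * d' < l^k * d'" using d'0 lk by (intro mult_strict_right_mono) auto
    then have d'd: "d' < d" using dd by simp
    have "d' dvd d" using dd by simp
    then have "\<not> CHAR('b) dvd d'" using less.prems dvd_trans by blast
    then obtain z' :: 'b where z': "ordP z' d'" using less.IH d'd d'0 by blast
    have "\<not> CHAR('b) dvd l"
    proof
      assume "CHAR('b) dvd l"
      then have "CHAR('b) = l" using l(1) pc by (simp add: primes_dvd_imp_eq)
      then show False using less.prems l(2) by simp
    qed
    then obtain zl :: 'b where zl: "ordP zl (l^k)" using exists_ord_pp[OF l(1) _ k1] by blast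
    have "coprime (l^k) d'" using l(1) ld' by (simp add: prime_imp_coprime)
    then have "ordP (zl * z') (l^k * d')" using zl z' by (rule ordP_mult[rotated 2])
    then show ?thesis using dd by auto
  qed
qed

lemma ff_power_card:
  fixes x :: "'a::{finite,field}"
  shows "x ^ card (UNIV :: 'a set) = x"
proof (cases "x = 0")
  case False
  have "x * (\<Prod>y\<in>UNIV-{0}. x * y) = x * x ^ (card (UNIV :: 'a set) - 1) * \<Prod>(UNIV-{0})"
    by (simp add: prod.distrib mult_ac)
  also have "x * x ^ (card (UNIV :: 'a set) - 1) = x ^ Suc (card (UNIV :: 'a set) - 1)"
    by (subst power_Suc) auto
  also have "Suc (card (UNIV :: 'a set) - 1) = card (UNIV :: 'a set)"
    using finite_UNIV_card_ge_0[where ?'a = 'a] by simp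
  also have "(\<Prod>y\<in>UNIV-{0}. x * y) = (\<Prod>y\<in>UNIV-{0}. y)"
    by (rule prod.reindex_bij_witness[of _ "\<lambda>y. y / x" "\<lambda>y. x * y"]) (use False in auto)
  finally show ?thesis
    by simp
qed (use finite_UNIV_card_ge_0[where ?'a = 'a] in auto)

lemma ff_power_card_pow:
  fixes x :: "'a::{finite,field}"
  shows "x ^ (card (UNIV :: 'a set) ^ n) = x"
  by (induction n) (simp_all add: ff_power_card power_mult)

lemma degree_Poly': "degree (Poly xs) \<le> length xs - 1"
  by (rule degree_le) (auto simp: nth_default_def)

lemma inj_Poly_len: "inj_on Poly {xs :: 'a::zero list. length xs = n}"
proof (rule inj_onI)
  fix xs ys :: "'a list"
  assume xs: "xs \<in> {xs. length xs = n}" and ys: "ys \<in> {xs. length xs = n}" and eq: "Poly xs = Poly ys"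
  show "xs = ys"
  proof (rule nth_equalityI)
    show "length xs = length ys" using xs ys by simp
    fix k assume "k < length xs"
    then have "coeff (Poly xs) k = xs ! k" "coeff (Poly ys) k = ys ! k"
      using xs ys by (auto simp: nth_default_def)
    then show "xs ! k = ys ! k" using eq by simp
  qed
qed

lemma exists_m:
  fixes i d :: nat
  assumes pc: "prime CHAR('a::{finite,field})" and i: "i \<ge> 1"
    and dq: "d dvd card (UNIV::'a set)^i - 1"
  shows "\<exists>m::'a poly. degree m \<le> i \<and> degree m \<ge> 1 \<and> m dvd monom 1 d - 1 \<and>
            (\<forall>n. m dvd monom 1 n - 1 \<longrightarrow> d dvd n)"
proof -
  define q where "q = card (UNIV::'a set)"
  define p where "p = CHAR('a)"
  define Q where "Q = q^i"
  have q2: "q \<ge> 2"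
  proof -
    have "card {0::'a, 1} \<le> q" unfolding q_def by (intro card_mono) auto
    then show ?thesis by simp
  qed
  have "q^1 \<le> q^i" using q2 by (intro power_increasing[OF i]) simp
  then have Q2: "Q \<ge> 2" unfolding Q_def using q2 by simp
  have dQ: "d dvd Q - 1" using dq unfolding Q_def q_def .
  have d0: "d > 0" using dQ Q2 by (cases d) auto
  have pq: "p dvd q" unfolding p_def q_def by (rule CHAR_dvd_CARD)
  have pd: "\<not> p dvd d"
  proof
    assume "p dvd d"
    then have "p dvd Q - 1" using dQ by (rule dvd_trans)
    moreover have "q dvd q^i" using i by (simp add: dvd_power)
    then have "p dvd Q" unfolding Q_def using pq dvd_trans by blast
    ultimately have "p dvd Q - (Q - 1)" by (rule dvd_diff_nat[rotated])
    then have "p dvd 1" using Q2 by simp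
    then show False using pc unfolding p_def by simp
  qed
  have pcL: "prime CHAR('a alg_closure)" using pc by simp
  have "\<not> CHAR('a alg_closure) dvd d" using pd unfolding p_def by simp
  then obtain \<beta> :: "'a alg_closure" where \<beta>: "ordP \<beta> d" using exists_ord[OF d0 pcL] by blast
  have \<beta>d: "\<beta>^d = 1" using \<beta> by (simp add: ordP_def)
  have "\<beta>^(Q-1) = 1" using \<beta> dQ by (simp add: ordP_def)
  moreover have "\<beta>^Q = \<beta>^(Suc (Q-1))" using Q2 by simp
  ultimately have \<beta>Q: "\<beta>^Q = \<beta>" by (simp only: power_Suc mult_1_right)
  define ev where "ev P = poly (map_poly to_ac P) \<beta>" for P :: "'a poly"
  have ev_add: "ev (P + R) = ev P + ev R" for P R by (simp add: ev_def ac_add)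
  have ev_diff: "ev (P - R) = ev P - ev R" for P R by (simp add: ev_def ac_diff)
  have ev_mult: "ev (P * R) = ev P * ev R" for P R by (simp add: ev_def ac_mult)
  have ev_Xn: "ev (monom 1 n - 1) = \<beta>^n - 1" for n by (simp add: ev_def ac_Xn poly_monom)
  have ev_const: "ev [:c:] = to_ac c" for c using ac_monom[of c 0] by (simp add: ev_def monom_0)
  obtain M where qM: "q = p^M" using card_prime_power[OF pc] unfolding q_def p_def by blast
  have frob: "ev P ^ Q = ev P" for P
  proof -
    have QM: "Q = CHAR('a alg_closure) ^ (M*i)" unfolding Q_def qM p_def by (simp add: power_mult)
    have "ev P ^ Q = (\<Sum>j\<le>degree (map_poly to_ac P). coeff (map_poly to_ac P) j * \<beta>^j) ^ Q"
      by (simp add: ev_def poly_altdef)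
    also have "\<dots> = (\<Sum>j\<le>degree (map_poly to_ac P). (coeff (map_poly to_ac P) j * \<beta>^j) ^ Q)"
      by (rule freshmans_dream_sum'[OF pcL QM])
    also have "\<dots> = (\<Sum>j\<le>degree (map_poly to_ac P). coeff (map_poly to_ac P) j * \<beta>^j)"
    proof (rule sum.cong[OF refl])
      fix j
      have "coeff (map_poly to_ac P) j ^ Q = to_ac (coeff P j ^ Q)"
        by (simp add: coeff_map_poly)
      also have "coeff P j ^ Q = coeff P j" unfolding Q_def q_def by (rule ff_power_card_pow)
      finally have c: "coeff (map_poly to_ac P) j ^ Q = coeff (map_poly to_ac P) j"
        by (simp add: coeff_map_poly)
      have "(\<beta>^j)^Q = (\<beta>^Q)^j" by (simp flip: power_mult add: mult.commute)
      then show "(coeff (map_poly to_ac P) j * \<beta>^j) ^ Q = coeff (map_poly to_ac P) j * \<beta>^j"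
        using c \<beta>Q by (simp add: power_mult_distrib)
    qed
    also have "\<dots> = ev P" by (simp add: ev_def poly_altdef)
    finally show ?thesis .
  qed
  define T where "T = {z :: 'a alg_closure. z^Q = z}"
  have cardT: "card T \<le> Q" and finT: "finite T"
  proof -
    define R where "R = monom (1::'a alg_closure) Q - monom 1 1"
    have cR: "coeff R Q = 1" unfolding R_def using Q2 by (simp add: coeff_monom)
    then have R0: "R \<noteq> 0" by auto
    have dR: "degree R \<le> Q" unfolding R_def using Q2
      by (intro degree_diff_le) (auto simp: degree_monom_le intro: le_trans[OF degree_monom_le])
    have "T = {z. poly R z = 0}" unfolding T_def R_def by (simp add: poly_monom)
    then show "card T \<le> Q" "finite T"
      using card_poly_roots_bound[OF R0] dR poly_roots_finite[OF R0] by auto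
  qed
  define LS where "LS = {xs :: 'a list. set xs \<subseteq> UNIV \<and> length xs = i + 1}"
  define D where "D = Poly ` LS"
  have cLS: "card LS = q^(i+1)" unfolding LS_def q_def by (rule card_lists_length_eq) simp
  have injP: "inj_on Poly LS" using inj_Poly_len[of "i+1"] unfolding LS_def
    by (auto intro: inj_on_subset)
  have cD: "card D = q^(i+1)" unfolding D_def using card_image[OF injP] cLS by simp
  have "ev ` D \<subseteq> T" unfolding T_def using frob by auto
  then have "card (ev ` D) \<le> card T" using finT by (rule card_mono[rotated])
  then have cevD: "card (ev ` D) \<le> Q" using cardT by simp
  have "\<not> inj_on ev D"
  proof
    assume "inj_on ev D"
    then have "card (ev ` D) = q^(i+1)" using cD by (simp add: card_image)
    moreover have "q^i < q^(i+1)" using q2 by simp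
    ultimately show False using cevD unfolding Q_def by simp
  qed
  then obtain P1 P2 where P12: "P1 \<in> D" "P2 \<in> D" "P1 \<noteq> P2" "ev P1 = ev P2"
    unfolding inj_on_def by blast
  define m0 where "m0 = P1 - P2"
  have m00: "m0 \<noteq> 0" using P12 unfolding m0_def by simp
  have evm0: "ev m0 = 0" using P12 unfolding m0_def by (simp add: ev_diff)
  have degD: "degree P \<le> i" if PD: "P \<in> D" for P
  proof -
    obtain xs where xs: "length xs = i + 1" "P = Poly xs" using PD unfolding D_def LS_def by blast
    have "degree (Poly xs) \<le> length xs - 1" by (rule degree_Poly')
    then show ?thesis using xs by simp
  qed
  have dm0: "degree m0 \<le> i" unfolding m0_def using degD[OF P12(1)] degD[OF P12(2)]
    by (rule degree_diff_le)
  obtain m where m: "m \<noteq> 0" "ev m = 0"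
    and mmin: "\<And>P. P \<noteq> 0 \<Longrightarrow> ev P = 0 \<Longrightarrow> degree m \<le> degree P"
    using ex_has_least_nat[of "\<lambda>P. P \<noteq> 0 \<and> ev P = 0" m0 degree] m00 evm0 by blast
  have dvdK: "m dvd P" if "ev P = 0" for P
  proof (rule ccontr)
    assume nd: "\<not> m dvd P"
    define r where "r = P mod m"
    have r0: "r \<noteq> 0" using nd unfolding r_def by (simp add: mod_eq_0_iff_dvd)
    have "P = (P div m) * m + r" unfolding r_def by simp
    then have "ev P = ev ((P div m) * m + r)" by simp
    then have "ev P = ev (P div m) * ev m + ev r" by (simp only: ev_add ev_mult)
    then have "ev r = 0" using that m(2) by simp
    then have "degree m \<le> degree r" using mmin r0 by blast
    moreover have "degree r < degree m" using degree_mod_less'[OF m(1)] r0 unfolding r_def by blast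
    ultimately show False by simp
  qed
  have "degree m \<le> i" using mmin[OF m00 evm0] dm0 by simp
  moreover have "degree m \<ge> 1"
  proof (rule ccontr)
    assume "\<not> degree m \<ge> 1"
    then have "degree m = 0" by simp
    then obtain c where c: "m = [:c:]" by (metis degree_eq_zeroE)
    then have "c \<noteq> 0" using m(1) by simp
    then show False using m(2) c ev_const by simp
  qed
  moreover have "m dvd monom 1 d - 1" using dvdK ev_Xn \<beta>d by simp
  moreover have "\<forall>n. m dvd monom 1 n - 1 \<longrightarrow> d dvd n"
  proof (intro allI impI)
    fix n assume "m dvd monom 1 n - 1"
    then obtain w where "monom 1 n - 1 = m * w" by (elim dvdE)
    then have "ev (monom 1 n - 1) = ev (m * w)" by simp
    then have "\<beta>^n - 1 = ev m * ev w" by (simp only: ev_Xn ev_mult)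
    then have "\<beta>^n = 1" using m(2) by simp
    then show "d dvd n" using \<beta> by (simp add: ordP_def)
  qed
  ultimately show ?thesis by blast
qed

theorem theorem3p3:
  fixes p k :: nat
  assumes "prime p" and "CHAR('a::{finite,field}) = p" and "k \<ge> 1"
  shows "(\<Union>i\<in>{1..k}. {p ^ j * d | j d. j \<le> t_exp p k i \<and>
                                       d \<in> divisors_set (card (UNIV :: 'a set) ^ i - 1)})
           \<subseteq> periods_set k TYPE('a)"
proof
  fix x assume "x \<in> (\<Union>i\<in>{1..k}. {p ^ j * d | j d. j \<le> t_exp p k i \<and>
                                       d \<in> divisors_set (card (UNIV :: 'a set) ^ i - 1)})"
  then obtain i j d where i: "1 \<le> i" "i \<le> k" and jt: "j \<le> t_exp p k i"
    and d0: "d > 0" and dq: "d dvd card (UNIV :: 'a set) ^ i - 1" and x: "x = p^j * d"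
    unfolding divisors_set_def by auto
  have p: "prime p" "CHAR('a) = p" using assms by auto
  have pc: "prime CHAR('a)" using p by simp
  have p2: "p \<ge> 2" using p(1) by (simp add: prime_ge_2_nat)
  obtain m :: "'a poly" where m: "degree m \<le> i" "degree m \<ge> 1" "m dvd monom 1 d - 1"
    and ordm: "\<And>n. m dvd monom 1 n - 1 \<Longrightarrow> d dvd n"
    using exists_m[OF pc i(1) dq] by blast
  have pd: "\<not> p dvd d"
  proof
    assume pd: "p dvd d"
    define q where "q = card (UNIV :: 'a set)"
    have "q > 0" unfolding q_def using finite_UNIV_card_ge_0[where 'a='a] by simp
    then have q1: "q^i \<ge> 1" by (simp add: Suc_le_eq)
    have "p dvd q" unfolding q_def using CHAR_dvd_CARD[where 'a='a] p(2) by simp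
    moreover have "q dvd q^i" using i by (simp add: dvd_power)
    ultimately have a: "p dvd q^i" by (rule dvd_trans)
    have "p dvd q^i - 1" using pd dq unfolding q_def using dvd_trans by blast
    then have "p dvd q^i - (q^i - 1)" using a by (rule dvd_diff_nat[rotated])
    then have "p dvd 1" using q1 by simp
    then show False using p(1) by simp
  qed
  define e where "e = (if j = 0 then 1 else p^(j-1) + 1)"
  have e0: "e \<ge> 1" unfolding e_def by simp
  have e1: "e \<le> p^j"
  proof (cases "j = 0")
    case False
    have "p^(j-1) \<ge> 1" using p2 by simp
    then have "p^(j-1) + 1 \<le> p^(j-1) * 2" by simp
    also have "\<dots> \<le> p^(j-1) * p" using p2 by simp
    also have "\<dots> = p^j" using False by (simp add: power_eq_if)
    finally show ?thesis using False unfolding e_def by simp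
  qed (simp add: e_def)
  have e2: "p^s < e" if "s < j" for s
  proof -
    have "p^s \<le> p^(j-1)" using that p2 by (intro power_increasing) auto
    then show ?thesis using that unfolding e_def by simp
  qed
  have eik: "e * i \<le> k"
  proof (cases "j = 0")
    case True
    then show ?thesis using i unfolding e_def by simp
  next
    case False
    then have "j - 1 < t_exp p k i" using jt by simp
    then have "\<not> p^(j-1) \<ge> k div i" unfolding t_exp_def by (rule not_less_Least)
    then have "e \<le> k div i" using False unfolding e_def by simp
    then have "e * i \<le> (k div i) * i" by simp
    also have "\<dots> \<le> k" by simp
    finally show ?thesis .
  qed
  define f where "f = m^e"
  have m0: "m \<noteq> 0" using m(2) by auto
  have df: "degree f = e * degree m" unfolding f_def by (simp add: degree_power_eq m0)
  have dfk: "degree f \<le> k"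
  proof -
    have "e * degree m \<le> e * i" using m(1) by (rule mult_le_mono2)
    then show ?thesis using df eik by linarith
  qed
  have df1: "degree f \<ge> 1" using df e0 m(2) by (simp add: Suc_le_eq)
  have fdvd: "f dvd monom 1 (p^j*d) - 1" unfolding f_def using ord_power1[OF p m(3) e1] .
  have N0: "p^j * d > 0" using d0 p2 by simp
  have cf0: "coeff f 0 \<noteq> 0"
  proof
    assume c: "coeff f 0 = 0"
    obtain w where w: "monom 1 (p^j*d) - 1 = f * w" using fdvd by (elim dvdE)
    have "poly (monom (1::'a) (p^j*d) - 1) 0 = poly f 0 * poly w 0" using w by simp
    moreover have "poly f 0 = 0" using c by (simp add: poly_0_coeff_0)
    moreover have "poly (monom (1::'a) (p^j*d) - 1) 0 = -1" using N0 by (simp add: poly_monom)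
    ultimately show False by simp
  qed
  have lp: "least_period (sq f) = p^j * d"
  proof (rule least_period_sq[OF df1 N0 fdvd])
    fix n assume "n > 0" "f dvd monom 1 n - 1"
    then show "p^j * d \<le> n" unfolding f_def
      using ord_power2[OF p ordm pd m(2) e0 e2] by blast
  qed
  have "satisfies_lin_rec k (sq f)" using rec_from_poly[OF df1 cf0 dfk] .
  then show "x \<in> periods_set k TYPE('a)"
    unfolding periods_set_def x using lp by auto
qed

end
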